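(* Let $N\geq 1$ be an integer. Then for all $0<t<\pi/2$, \[ \lambda_N t^{2N+2}<\left(\frac{t}{\sin t}\right)^2+\frac{t}{\tan t}-\left(2+\sum_{j=1}^{N-1}\frac{j\cdot 2^{2j+3}|B_{2j+2}|}{(2j+2)!}t^{2j+2}\right)<\mu_N t^{2N+2}, \] where \[ \lambda_N=\frac{N\cdot 2^{2N+3}|B_{2N+2}|}{(2N+2)!},\qquad \mu_N=\frac{64N}{\pi^{2N+2}}\sum_{k=1}^{\infty}\frac{1}{k^{2N-2}(4k^2-1)^2}-\frac{16(N-1)}{\pi^{2N+2}}\sum_{k=1}^{\infty}\frac{1}{k^{2N}(4k^2-1)^2}, \] and these constants are best possible (i.e. $\lambda_N$ is the largest and $\mu_N$ the smallest constant for which the respective inequality holds on $(0,\pi/2)$).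
   Context: The Bernoulli numbers $B_n$ are defined by $\frac{t}{e^t-1}=\sum_{n=0}^\infty B_n\frac{t^n}{n!}$ for $|t|<2\pi$. An empty sum is understood to be zero. *)

theory Defs
  imports "HOL-Analysis.Analysis" "HOL-Computational_Algebra.Formal_Power_Series"
begin

definition bernoulli :: "nat \<Rightarrow> real" where
  "bernoulli n = fact n * fps_nth (fps_X / (fps_exp 1 - 1)) n"

definition F_N :: "nat \<Rightarrow> real \<Rightarrow> real" where
  "F_N N t = (t / sin t)^2 + t / tan t
     - (2 + (\<Sum>j=1..N-1. real j * 2^(2*j+3) * \<bar>bernoulli (2*j+2)\<bar> / fact (2*j+2) * t^(2*j+2)))"

definition lambda_N :: "nat \<Rightarrow> real" where
  "lambda_N N = real N * 2^(2*N+3) * \<bar>bernoulli (2*N+2)\<bar> / fact (2*N+2)"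

definition mu_N :: "nat \<Rightarrow> real" where
  "mu_N N = 64 * real N / pi^(2*N+2) * (\<Sum>k. 1 / (real (Suc k)^(2*N-2) * (4 * real (Suc k)^2 - 1)^2))
          - 16 * (real N - 1) / pi^(2*N+2) * (\<Sum>k. 1 / (real (Suc k)^(2*N) * (4 * real (Suc k)^2 - 1)^2))"

end

theory Submission
  imports Defs
begin

definition Bf :: "real fps" where "Bf = fps_X / (fps_exp 1 - 1)"
definition Cf :: "real fps" where "Cf = Bf + fps_const (1/2) * fps_X"

lemma expm1_nz: "(fps_exp (1::real) - 1) \<noteq> 0"
proof
  assume "fps_exp (1::real) - 1 = 0"
  hence "fps_nth (fps_exp (1::real) - 1) 1 = 0" by simp
  thus False by simp
qed

lemma expm1_subdeg: "subdegree (fps_exp (1::real) - 1) = 1"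
  by (rule subdegreeI) auto

lemma Bf_times: "Bf * (fps_exp 1 - 1) = fps_X"
  unfolding Bf_def using expm1_nz expm1_subdeg
  by (intro fps_times_divide_eq) auto

lemma Bf_0: "fps_nth Bf 0 = 1"
proof -
  have "fps_nth (Bf * (fps_exp 1 - 1)) 1 = 1" by (simp add: Bf_times)
  thus ?thesis by (simp add: fps_mult_nth)
qed

lemma Bf_ode: "fps_X * fps_deriv Bf = Bf - Bf^2 - fps_X * Bf"
proof -
  define e where "e = fps_exp (1::real) - 1"
  have X: "fps_X = Bf * e" using Bf_times e_def by simp
  have D: "fps_deriv Bf * e + Bf * (e + 1) = 1"
  proof -
    have "fps_deriv (Bf * e) = fps_deriv fps_X" using X by simp
    thus ?thesis by (simp add: e_def algebra_simps)
  qed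
  have "e * (fps_X * fps_deriv Bf - (Bf - Bf^2 - fps_X * Bf)) = 0"
  proof -
    have "e * (fps_X * fps_deriv Bf - (Bf - Bf^2 - fps_X * Bf))
        = Bf * e * (fps_deriv Bf * e + Bf * (e + 1) - 1)"
      unfolding X by algebra
    thus ?thesis using D by simp
  qed
  moreover have "e \<noteq> 0" using expm1_nz e_def by simp
  ultimately show ?thesis by simp
qed

lemma Cf_ode: "fps_X * fps_deriv Cf = Cf - Cf^2 + fps_const (1/4) * fps_X^2"
proof -
  have h: "fps_const (1/2::real) * fps_const (1/2) = fps_const (1/4)"
    by (simp add: fps_const_mult)
  have "fps_X * fps_deriv Cf = fps_X * fps_deriv Bf + fps_const (1/2) * fps_X"
    by (simp add: Cf_def algebra_simps)
  also have "\<dots> = Cf - Cf^2 + fps_const (1/4) * fps_X^2"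
  proof -
    have hh: "fps_const (1/2::real) + fps_const (1/2) = 1"
      by (simp flip: fps_const_add)
    show ?thesis unfolding Bf_ode Cf_def h[symmetric] using hh by algebra
  qed
  finally show ?thesis .
qed

definition Gf :: "real fps" where "Gf = fps_X * fps_cos 1 / fps_sin 1"

lemma sin_nz: "fps_sin (1::real) \<noteq> 0"
proof
  assume "fps_sin (1::real) = 0"
  hence "fps_nth (fps_sin (1::real)) 1 = 0" by simp
  thus False by (simp add: fps_sin_def)
qed

lemma sin_subdeg: "subdegree (fps_sin (1::real)) = 1"
  by (rule subdegreeI) (auto simp: fps_sin_def)

lemma Xcos_subdeg: "1 \<le> subdegree (fps_X * fps_cos (1::real))"
proof (rule subdegree_geI)
  show "fps_X * fps_cos (1::real) \<noteq> 0"
  proof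
    assume "fps_X * fps_cos (1::real) = 0"
    hence "fps_nth (fps_X * fps_cos (1::real)) 1 = 0" by simp
    thus False by (simp add: fps_cos_def)
  qed
qed simp

lemma Gf_times: "Gf * fps_sin 1 = fps_X * fps_cos 1"
  unfolding Gf_def using sin_nz sin_subdeg Xcos_subdeg
  by (intro fps_times_divide_eq) auto

lemma Gf_ode: "fps_X * fps_deriv Gf = Gf - Gf^2 - fps_X^2"
proof -
  define s where "s = fps_sin (1::real)"
  define c where "c = fps_cos (1::real)"
  have P: "Gf * s = fps_X * c" using Gf_times s_def c_def by simp
  have D: "fps_deriv Gf * s + Gf * c = c - fps_X * s"
  proof -
    have "fps_deriv (Gf * s) = fps_deriv (fps_X * c)" using P by simp
    moreover have m1: "fps_const (-1::real) = - 1" by (simp add: fps_eq_iff)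
    ultimately show ?thesis by (simp add: s_def c_def fps_sin_deriv fps_cos_deriv algebra_simps m1)
  qed
  have "s * (fps_X * fps_deriv Gf - (Gf - Gf^2 - fps_X^2)) = 
        fps_X * (fps_deriv Gf * s + Gf * c) - fps_X * Gf * c - Gf * s + Gf * (Gf * s) + fps_X^2 * s"
    by algebra
  also have "\<dots> = 0" unfolding D P by algebra
  finally have "s * (fps_X * fps_deriv Gf - (Gf - Gf^2 - fps_X^2)) = 0" .
  moreover have "s \<noteq> 0" using sin_nz s_def by simp
  ultimately show ?thesis by simp
qed

lemma Gf_0: "fps_nth Gf 0 = 1"
proof -
  have "fps_nth (Gf * fps_sin 1) 1 = fps_nth (fps_X * fps_cos (1::real)) 1" by (simp add: Gf_times)
  thus ?thesis by (simp add: fps_mult_nth fps_sin_def fps_cos_def)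
qed


definition recP :: "(nat \<Rightarrow> real) \<Rightarrow> real \<Rightarrow> bool" where
  "recP h k \<longleftrightarrow> h 0 = 1 \<and> (\<forall>n\<ge>1. (real n + 1) * h n = - (\<Sum>i=1..n-1. h i * h (n-i)) + (if n = 2 then k else 0))"

lemma ode_recP:
  fixes H :: "real fps"
  assumes ode: "fps_X * fps_deriv H = H - H^2 + fps_const k * fps_X^2" and h0: "fps_nth H 0 = 1"
  shows "recP (fps_nth H) k"
  unfolding recP_def
proof (intro conjI allI impI h0)
  fix n :: nat assume n: "n \<ge> 1"
  have "fps_nth (fps_X * fps_deriv H) n = fps_nth (H - H^2 + fps_const k * fps_X^2) n"
    using ode by simp
  moreover have "fps_nth (fps_X * fps_deriv H) n = real n * fps_nth H n"
    by (simp add: fps_mult_fps_X_deriv_shift)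
  moreover have "fps_nth (H^2) n = (\<Sum>i=0..n. fps_nth H i * fps_nth H (n-i))"
    by (simp add: power2_eq_square fps_mult_nth)
  moreover have "fps_nth (fps_const k * fps_X^2) n = (if n = 2 then k else 0)"
    by (simp add: fps_mult_left_const_nth fps_X_power_nth)
  ultimately have e: "real n * fps_nth H n = fps_nth H n - (\<Sum>i=0..n. fps_nth H i * fps_nth H (n-i)) + (if n = 2 then k else 0)"
    by simp
  obtain m where m: "n = Suc m" using n by (cases n) auto
  have "(\<Sum>i=0..n. fps_nth H i * fps_nth H (n-i)) = fps_nth H 0 * fps_nth H n + (\<Sum>i=1..n. fps_nth H i * fps_nth H (n-i))"
    by (simp add: sum.atLeast_Suc_atMost)
  also have "(\<Sum>i=1..n. fps_nth H i * fps_nth H (n-i)) = (\<Sum>i=1..n-1. fps_nth H i * fps_nth H (n-i)) + fps_nth H n * fps_nth H 0"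
    unfolding m by (simp add: sum.cl_ivl_Suc)
  finally show "(real n + 1) * fps_nth H n = - (\<Sum>i=1..n-1. fps_nth H i * fps_nth H (n-i)) + (if n = 2 then k else 0)"
    using e h0 by (simp add: algebra_simps)
qed

lemma recP_unique:
  assumes "recP h k" "recP g k"
  shows "h n = g n"
proof (induction n rule: less_induct)
  case (less n)
  show ?case
  proof (cases "n = 0")
    case True thus ?thesis using assms by (simp add: recP_def)
  next
    case False
    hence n: "n \<ge> 1" by simp
    have "(\<Sum>i=1..n-1. h i * h (n-i)) = (\<Sum>i=1..n-1. g i * g (n-i))"
    proof (intro sum.cong refl)
      fix i assume "i \<in> {1..n-1}"
      hence "i < n" "n - i < n" using n by auto
      thus "h i * h (n-i) = g i * g (n-i)" using less.IH by simp
    qed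
    moreover have "(real n + 1) * h n = - (\<Sum>i=1..n-1. h i * h (n-i)) + (if n = 2 then k else 0)"
      using assms(1) n by (simp add: recP_def)
    moreover have "(real n + 1) * g n = - (\<Sum>i=1..n-1. g i * g (n-i)) + (if n = 2 then k else 0)"
      using assms(2) n by (simp add: recP_def)
    ultimately have "(real n + 1) * h n = (real n + 1) * g n" by simp
    thus ?thesis by (smt (verit) of_nat_0_le_iff mult_cancel_left)
  qed
qed

lemma recP_odd:
  assumes "recP h k" "odd n"
  shows "h n = 0"
  using assms(2)
proof (induction n rule: less_induct)
  case (less n)
  have n: "n \<ge> 1" using less.prems by (cases n) auto
  have "(\<Sum>i=1..n-1. h i * h (n-i)) = 0"
  proof (intro sum.neutral ballI)
    fix i assume i: "i \<in> {1..n-1}"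
    show "h i * h (n-i) = 0"
    proof (cases "odd i")
      case True
      have "i < n" using i n by auto
      thus ?thesis using True less.IH[of i] by simp
    next
      case False
      hence "odd (n-i)" using less.prems i by auto
      moreover have "n - i < n" using i n by auto
      ultimately show ?thesis using less.IH[of "n-i"] by simp
    qed
  qed
  moreover have "(real n + 1) * h n = - (\<Sum>i=1..n-1. h i * h (n-i)) + (if n = 2 then k else 0)"
    using assms(1) n by (simp add: recP_def)
  moreover have "n \<noteq> 2" using less.prems by auto
  ultimately have "(real n + 1) * h n = 0" by simp
  thus ?case by simp
qed

definition Aseq :: "(nat \<Rightarrow> real) \<Rightarrow> nat \<Rightarrow> real" where
  "Aseq c n = (if even n then c n * (-4) ^ (n div 2) else 0)"

lemma recP_Aseq:
  assumes "recP c (1/4)"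
  shows "recP (Aseq c) (-1)"
  unfolding recP_def
proof (intro conjI allI impI)
  show "Aseq c 0 = 1" using assms by (simp add: recP_def Aseq_def)
next
  fix n :: nat assume n: "n \<ge> 1"
  have codd: "c j = 0" if "odd j" for j using recP_odd[OF assms that] .
  show "(real n + 1) * Aseq c n = - (\<Sum>i=1..n-1. Aseq c i * Aseq c (n-i)) + (if n = 2 then -1 else 0)"
  proof (cases "even n")
    case True
    have s: "(\<Sum>i=1..n-1. Aseq c i * Aseq c (n-i)) = (-4) ^ (n div 2) * (\<Sum>i=1..n-1. c i * c (n-i))"
      unfolding sum_distrib_left
    proof (intro sum.cong refl)
      fix i assume i: "i \<in> {1..n-1}"
      show "Aseq c i * Aseq c (n-i) = (-4) ^ (n div 2) * (c i * c (n-i))"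
      proof (cases "even i")
        case True
        hence "even (n-i)" using \<open>even n\<close> i by auto
        moreover have "i div 2 + (n-i) div 2 = n div 2" using True \<open>even n\<close> i
          by (elim evenE) auto
        ultimately show ?thesis using True
          by (simp add: Aseq_def power_add[symmetric])
      next
        case False thus ?thesis by (simp add: Aseq_def codd)
      qed
    qed
    have "(real n + 1) * c n = - (\<Sum>i=1..n-1. c i * c (n-i)) + (if n = 2 then 1/4 else 0)"
      using assms n by (simp add: recP_def)
    hence "(real n + 1) * Aseq c n = (-4) ^ (n div 2) * (- (\<Sum>i=1..n-1. c i * c (n-i)) + (if n = 2 then 1/4 else 0))"
      using True by (simp add: Aseq_def)
    also have "\<dots> = - (\<Sum>i=1..n-1. Aseq c i * Aseq c (n-i)) + (if n = 2 then -1 else 0)"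
      unfolding s by (auto simp: algebra_simps)
    finally show ?thesis .
  next
    case False
    have "(\<Sum>i=1..n-1. Aseq c i * Aseq c (n-i)) = 0"
    proof (intro sum.neutral ballI)
      fix i assume i: "i \<in> {1..n-1}"
      show "Aseq c i * Aseq c (n-i) = 0"
        using False i by (cases "even i") (auto simp: Aseq_def)
    qed
    moreover have "n \<noteq> 2" using False by auto
    ultimately show ?thesis using False by (simp add: Aseq_def)
  qed
qed

lemma recP_Cf: "recP (fps_nth Cf) (1/4)"
proof (rule ode_recP)
  show "fps_X * fps_deriv Cf = Cf - Cf^2 + fps_const (1/4) * fps_X^2" by (rule Cf_ode)
  show "fps_nth Cf 0 = 1" by (simp add: Cf_def Bf_0)
qed

lemma recP_Gf: "recP (fps_nth Gf) (-1)"
proof (rule ode_recP)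
  have m1: "fps_const (-1::real) = - 1" by (simp add: fps_eq_iff)
  show "fps_X * fps_deriv Gf = Gf - Gf^2 + fps_const (-1) * fps_X^2"
    unfolding Gf_ode m1 by simp
  show "fps_nth Gf 0 = 1" by (rule Gf_0)
qed

lemma Gf_Cf: "fps_nth Gf n = Aseq (fps_nth Cf) n"
  by (rule recP_unique[OF recP_Gf recP_Aseq[OF recP_Cf]])

lemma bernoulli_Gf:
  assumes "m \<ge> 1"
  shows "bernoulli (2*m) = fact (2*m) * fps_nth Gf (2*m) / (-4)^m"
proof -
  have "fps_nth Cf (2*m) = fps_nth Bf (2*m)" using assms by (simp add: Cf_def)
  thus ?thesis unfolding Gf_Cf Aseq_def bernoulli_def Bf_def[symmetric] by simp
qed


lemma Gamma_refl_real:
  fixes x :: real assumes "0 < x" "x < 1"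
  shows "Gamma x * Gamma (1-x) = pi / sin (pi*x)"
proof -
  have "Gamma (complex_of_real x) * Gamma (1 - complex_of_real x) = of_real pi / sin (of_real pi * of_real x)"
    by (rule Gamma_reflection_complex)
  also have "Gamma (1 - complex_of_real x) = Gamma (complex_of_real (1 - x))" by simp
  also have "sin (of_real pi * of_real x :: complex) = of_real (sin (pi*x))"
    by (simp flip: sin_of_real)
  finally have "complex_of_real (Gamma x * Gamma (1-x)) = complex_of_real (pi / sin (pi*x))"
    by (simp only: Gamma_complex_of_real of_real_mult of_real_divide)
  thus ?thesis by (simp only: of_real_eq_iff)
qed

lemma digamma_refl:
  fixes x :: real assumes x: "0 < x" "x < 1"
  shows "Digamma (1-x) - Digamma x = pi * cos (pi*x) / sin (pi*x)"
proof -
  define h where "h y = ln_Gamma y + ln_Gamma (1-y) + ln (sin (pi*y))" for y :: real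
  have sinpos: "sin (pi*y) > 0" if "0 < y" "y < 1" for y :: real
    using that by (intro sin_gt_zero) auto
  have hc: "h y = ln pi" if "y \<in> {0<..<1}" for y
  proof -
    from that have y: "0 < y" "y < 1" by auto
    have "h y = ln (Gamma y) + ln (Gamma (1-y)) + ln (sin (pi*y))"
      using y by (simp add: h_def ln_Gamma_real_pos)
    also have "\<dots> = ln (Gamma y * Gamma (1-y) * sin (pi*y))"
    proof -
      have a: "Gamma y > 0" "Gamma (1-y) > 0" using y by auto
      have "ln (Gamma y * Gamma (1-y) * sin (pi*y)) = ln (Gamma y * Gamma (1-y)) + ln (sin (pi*y))"
        using a sinpos[OF y] by (intro ln_mult_pos) auto
      also have "ln (Gamma y * Gamma (1-y)) = ln (Gamma y) + ln (Gamma (1-y))"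
        using a by (intro ln_mult_pos) auto
      finally show ?thesis by simp
    qed
    also have "Gamma y * Gamma (1-y) * sin (pi*y) = pi"
      using Gamma_refl_real[OF y] sinpos[OF y] by simp
    finally show ?thesis .
  qed
  have d1: "(h has_field_derivative (Digamma x - Digamma (1-x) + pi * cos (pi*x) / sin (pi*x))) (at x)"
    unfolding h_def using x sinpos[OF x]
    by (auto intro!: derivative_eq_intros simp: field_simps)
  have d2: "(h has_field_derivative 0) (at x)"
    by (rule has_field_derivative_transform_within_open[of "\<lambda>_. ln pi" _ _ "{0<..<1}"])
       (use x hc in auto)
  from DERIV_unique[OF d1 d2] show ?thesis by simp
qed

lemma polygamma_refl:
  fixes x :: real assumes x: "0 < x" "x < 1"
  shows "Polygamma 1 x + Polygamma 1 (1-x) = pi^2 / (sin (pi*x))^2"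
proof -
  define h where "h y = Digamma (1-y) - Digamma y - pi * cos (pi*y) / sin (pi*y)" for y :: real
  have sinpos: "sin (pi*y) > 0" if "0 < y" "y < 1" for y :: real
    using that by (intro sin_gt_zero) auto
  have hc: "h y = 0" if "y \<in> {0<..<1}" for y
    using that digamma_refl[of y] by (auto simp: h_def)
  have nz: "y \<notin> \<int>\<^sub>\<le>\<^sub>0" if "y > 0" for y :: real
    using that by (auto elim!: nonpos_Ints_cases)
  have d1: "(h has_field_derivative (- Polygamma 1 (1-x) - Polygamma 1 x + pi^2 / (sin (pi*x))^2)) (at x)"
  proof -
    have sc: "sin (pi*x) * sin (pi*x) = 1 - cos (pi*x) * cos (pi*x)"
      using sin_cos_squared_add[of "pi*x"] unfolding power2_eq_square by linarith
    show ?thesis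
    unfolding h_def using x sinpos[OF x] nz[of x] nz[of "1-x"]
    by (auto intro!: derivative_eq_intros simp: field_simps power2_eq_square sc)
  qed
  have d2: "(h has_field_derivative 0) (at x)"
    by (rule has_field_derivative_transform_within_open[of "\<lambda>_. 0" _ _ "{0<..<1}"])
       (use x hc in auto)
  from DERIV_unique[OF d1 d2] show ?thesis by simp
qed


lemma cot_pf:
  fixes x :: real assumes x: "0 < x" "x < 1"
  shows "(\<lambda>k. 2*x^2/((real k+1)^2 - x^2)) sums (1 - pi*x*cos(pi*x)/sin(pi*x))"
proof -
  define S where "S = pi * cos (pi*x) / sin (pi*x)"
  have d1: "(\<lambda>k. inverse (real (Suc k)) - inverse (x + real k)) sums (Digamma x + euler_mascheroni)"
    using summable_Digamma[of x] x by (simp add: Digamma_def summable_sums)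
  have d2: "(\<lambda>k. inverse (real (Suc k)) - inverse ((1-x) + real k)) sums (Digamma (1-x) + euler_mascheroni)"
    using summable_Digamma[of "1-x"] x by (simp add: Digamma_def summable_sums)
  have u: "(\<lambda>k. inverse (x + real k) - inverse ((1-x) + real k)) sums S"
    using sums_diff[OF d2 d1] digamma_refl[OF x] by (simp add: S_def)
  have lim: "(\<lambda>k. inverse (x + real k)) \<longlonglongrightarrow> 0"
    by (intro tendsto_inverse_0_at_top filterlim_tendsto_add_at_top[OF tendsto_const] filterlim_real_sequentially)
  have w: "(\<lambda>k. inverse (x + real k) - inverse (x + real (Suc k))) sums (inverse x - 0)"
    using telescope_sums'[OF lim] by simp
  have v: "(\<lambda>k. (inverse (x + real k) - inverse ((1-x) + real k)) - (inverse (x + real k) - inverse (x + real (Suc k))))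
            sums (S - (inverse x - 0))"
    by (rule sums_diff[OF u w])
  hence v2: "(\<lambda>k. (-x) * ((inverse (x + real k) - inverse ((1-x) + real k)) - (inverse (x + real k) - inverse (x + real (Suc k)))))
            sums ((-x) * (S - (inverse x - 0)))"
    by (rule sums_mult)
  have eq: "(-x) * ((inverse (x + real k) - inverse ((1-x) + real k)) - (inverse (x + real k) - inverse (x + real (Suc k))))
           = 2*x^2/((real k+1)^2 - x^2)" for k
  proof -
    have a: "x + real (Suc k) > 0" "(1-x) + real k > 0" "(real k+1)^2 - x^2 > 0"
      using x by (auto simp: power2_eq_square intro: mult_strict_mono)
    have "(real k+1)^2 - x^2 = (x + real (Suc k)) * ((1-x) + real k)" by (simp add: algebra_simps power2_eq_square)
    thus ?thesis using a by (simp add: field_simps power2_eq_square)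
  qed
  have "(-x) * (S - (inverse x - 0)) = 1 - pi*x*cos(pi*x)/sin(pi*x)"
    using x by (simp add: S_def field_simps)
  thus ?thesis using v2 unfolding eq by simp
qed

lemma sq_pf:
  fixes x :: real assumes x: "0 < x" "x < 1"
  shows "(\<lambda>k. x^2/(x + real k + 1)^2 + x^2/(real k + 1 - x)^2) sums ((pi*x/sin(pi*x))^2 - 1)"
proof -
  have p1: "(\<lambda>k. inverse ((x + real k)^2)) sums Polygamma 1 x"
    using Polygamma_LIMSEQ[of x 1] x by (simp add: numeral_2_eq_2)
  have p2: "(\<lambda>k. inverse (((1-x) + real k)^2)) sums Polygamma 1 (1-x)"
    using Polygamma_LIMSEQ[of "1-x" 1] x by (simp add: numeral_2_eq_2)
  have p1': "(\<lambda>k. inverse ((x + real (Suc k))^2)) sums (Polygamma 1 x - inverse (x^2))"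
    using p1 sums_Suc_iff[of "\<lambda>k. inverse ((x + real k)^2)" "Polygamma 1 x - inverse (x^2)"] by simp
  have s: "(\<lambda>k. x^2 * (inverse ((x + real (Suc k))^2) + inverse (((1-x) + real k)^2)))
       sums (x^2 * (Polygamma 1 x - inverse (x^2) + Polygamma 1 (1-x)))"
    by (intro sums_mult sums_add p1' p2)
  have "x^2 * (Polygamma 1 x - inverse (x^2) + Polygamma 1 (1-x)) = x^2 * (Polygamma 1 x + Polygamma 1 (1-x)) - 1"
    using x by (simp add: field_simps)
  also have "\<dots> = x^2 * (pi^2 / (sin (pi*x))^2) - 1" by (simp only: polygamma_refl[OF x])
  also have "\<dots> = (pi*x/sin(pi*x))^2 - 1" by (simp add: power_divide power_mult_distrib)
  finally have "x^2 * (Polygamma 1 x - inverse (x^2) + Polygamma 1 (1-x)) = (pi*x/sin(pi*x))^2 - 1" .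
  moreover have "x^2 * (inverse ((x + real (Suc k))^2) + inverse (((1-x) + real k)^2))
      = x^2/(x + real k + 1)^2 + x^2/(real k + 1 - x)^2" for k
    by (simp add: field_simps add_ac diff_add_eq)
  ultimately show ?thesis using s by simp
qed

lemma f_series:
  fixes x :: real assumes x: "0 < x" "x < 1"
  shows "(\<lambda>k. 4*x^4/((real k+1)^2 - x^2)^2) sums ((pi*x/sin(pi*x))^2 + pi*x/tan(pi*x) - 2)"
proof -
  have s: "(\<lambda>k. (x^2/(x + real k + 1)^2 + x^2/(real k + 1 - x)^2) - 2*x^2/((real k+1)^2 - x^2))
     sums (((pi*x/sin(pi*x))^2 - 1) - (1 - pi*x*cos(pi*x)/sin(pi*x)))"
    by (rule sums_diff[OF sq_pf[OF x] cot_pf[OF x]])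
  have eq: "(x^2/(x + real k + 1)^2 + x^2/(real k + 1 - x)^2) - 2*x^2/((real k+1)^2 - x^2)
          = 4*x^4/((real k+1)^2 - x^2)^2" for k
  proof -
    have a: "x + real k + 1 > 0" "real k + 1 - x > 0" using x by auto
    have b: "(real k+1)^2 - x^2 = (x + real k + 1) * (real k + 1 - x)" by (simp add: algebra_simps power2_eq_square)
    define p where "p = x + real k + 1"
    define q where "q = real k + 1 - x"
    have pq: "p \<noteq> 0" "q \<noteq> 0" using a by (auto simp: p_def q_def)
    have "x^2/p^2 + x^2/q^2 - 2*x^2/(p*q) = x^2*(q-p)^2/(p*q)^2"
      using pq by (simp add: field_simps power2_eq_square)
    also have "q - p = -2*x" by (simp add: p_def q_def)
    finally have "x^2/p^2 + x^2/q^2 - 2*x^2/(p*q) = 4*x^4/(p*q)^2" by (simp add: power_mult_distrib power2_eq_square power4_eq_xxxx)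
    thus ?thesis unfolding b p_def q_def by simp
  qed
  have "pi*x/tan(pi*x) = pi*x*cos(pi*x)/sin(pi*x)" by (simp add: tan_def)
  thus ?thesis using s unfolding eq by simp
qed


definition Z :: "nat \<Rightarrow> real" where "Z m = (\<Sum>k. 1 / (real k + 1)^m)"

lemma Z_sums: assumes "m \<ge> 2" shows "(\<lambda>k. 1 / (real k + 1)^m) sums Z m"
proof -
  have "summable (\<lambda>k. inverse (real k ^ m))" using inverse_power_summable[of m] assms by simp
  hence "summable (\<lambda>k. inverse (real (k + 1) ^ m))" by (rule summable_ignore_initial_segment)
  hence "summable (\<lambda>k. 1 / (real k + 1)^m)" by (simp add: inverse_eq_divide add_ac)
  thus ?thesis by (simp add: Z_def summable_sums)
qed

lemma Z_pos: assumes "m \<ge> 2" shows "Z m > 0"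
  unfolding Z_def using Z_sums[OF assms] by (intro suminf_pos) (auto simp: sums_iff)

lemma double_sums_swap:
  fixes a :: "nat \<Rightarrow> nat \<Rightarrow> real"
  assumes nn: "\<And>k m. a k m \<ge> 0"
    and rows: "\<And>k. (\<lambda>m. a k m) sums r k" and tot: "r sums R"
    and cols: "\<And>m. (\<lambda>k. a k m) sums c m"
  shows "c sums R"
proof -
  have rows': "((\<lambda>m. a k m) has_sum r k) UNIV" for k
    by (rule sums_nonneg_imp_has_sum[OF rows nn])
  have rnn: "r k \<ge> 0" for k
  proof -
    have "summable (a k)" "suminf (a k) = r k" using rows[of k] by (auto simp: sums_iff)
    thus ?thesis using suminf_nonneg[of "a k"] nn by auto
  qed
  have tot': "(r has_sum R) UNIV" by (rule sums_nonneg_imp_has_sum[OF tot rnn])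
  have sm: "(\<lambda>(k,m). a k m) summable_on (UNIV \<times> UNIV)"
    using summable_on_SigmaI[where f = "\<lambda>(k,m). a k m" and A = UNIV and B = "\<lambda>_. UNIV" and g = r]
          rows' tot' nn by (auto simp: has_sum_imp_summable)
  have h1: "((\<lambda>(k,m). a k m) has_sum R) (UNIV \<times> UNIV)"
    using has_sum_SigmaI[where f = "\<lambda>(k,m). a k m" and A = UNIV and B = "\<lambda>_. UNIV" and g = r]
          rows' tot' sm by auto
  hence h2: "((\<lambda>(m,k). a k m) has_sum R) (UNIV \<times> UNIV)"
    using has_sum_swap[THEN iffD1, OF h1] by (simp add: case_prod_unfold)
  have cols': "((\<lambda>k. a k m) has_sum c m) UNIV" for m
    by (rule sums_nonneg_imp_has_sum[OF cols nn])
  have "(c has_sum R) UNIV"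
    using has_sum_SigmaD[where f = "\<lambda>(m,k). a k m" and A = UNIV and B = "\<lambda>_. UNIV" and g = c] h2 cols'
    by auto
  thus ?thesis by (rule has_sum_imp_sums)
qed

lemma cot_zeta:
  fixes x :: real assumes x: "0 < x" "x < 1"
  shows "(\<lambda>m. 2 * Z (2*m+2) * x^(2*m+2)) sums (1 - pi*x*cos(pi*x)/sin(pi*x))"
proof (rule double_sums_swap[where a = "\<lambda>k m. 2 * (x^2/(real k+1)^2)^(m+1)"])
  fix k m show "0 \<le> 2 * (x^2/(real k+1)^2)^(m+1)" by simp
next
  fix k :: nat
  define u where "u = x^2/(real k+1)^2"
  have u: "0 \<le> u" "u < 1"
  proof -
    show "0 \<le> u" by (simp add: u_def)
    have "x^2 < (real k + 1)^2" using x by (intro power_strict_mono) auto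
    thus "u < 1" by (simp add: u_def)
  qed
  have s: "(\<lambda>m. (2*u) * u^m) sums ((2*u) * (1 / (1 - u)))"
    using u by (intro sums_mult geometric_sums) auto
  have kx: "(real k+1)^2 - x^2 > 0"
  proof -
    have "x^2 < (real k + 1)^2" using x by (intro power_strict_mono) auto
    thus ?thesis by simp
  qed
  have e1: "(2*u) * u^m = 2 * (x^2/(real k+1)^2)^(m+1)" for m
    by (simp add: u_def)
  have e2: "(2*u) * (1 / (1 - u)) = 2*x^2/((real k+1)^2 - x^2)"
    using u kx unfolding u_def by (simp add: field_simps)
  show "(\<lambda>m. 2 * (x^2/(real k+1)^2)^(m+1)) sums (2*x^2/((real k+1)^2 - x^2))"
    using s unfolding e1 e2 .
next
  show "(\<lambda>k. 2*x^2/((real k+1)^2 - x^2)) sums (1 - pi*x*cos(pi*x)/sin(pi*x))"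
    by (rule cot_pf[OF x])
next
  fix m :: nat
  have "(\<lambda>k. (2 * x^(2*m+2)) * (1 / (real k + 1)^(2*m+2))) sums ((2 * x^(2*m+2)) * Z (2*m+2))"
    by (intro sums_mult Z_sums) auto
  moreover have "(2 * x^(2*m+2)) * (1 / (real k + 1)^(2*m+2)) = 2 * (x^2/(real k+1)^2)^(m+1)" for k
  proof -
    have mm: "2*m+2 = 2*(m+1)" by simp
    show ?thesis unfolding mm power_divide power_mult by simp
  qed
  ultimately show "(\<lambda>k. 2 * (x^2/(real k+1)^2)^(m+1)) sums (2 * Z (2*m+2) * x^(2*m+2))"
    by (simp add: mult_ac)
qed

definition alpha :: "nat \<Rightarrow> real" where
  "alpha n = (if n = 0 then 1 else if even n then -2 * Z n / pi^n else 0)"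

lemma alpha_sums:
  fixes t :: real assumes t: "t \<noteq> 0" "\<bar>t\<bar> < pi"
  shows "(\<lambda>n. alpha n * t^n) sums (t*cos t/sin t)"
proof -
  define x where "x = \<bar>t\<bar>/pi"
  have x: "0 < x" "x < 1" using t pi_gt_zero by (auto simp: x_def field_simps)
  have e1: "pi*x*cos(pi*x)/sin(pi*x) = t*cos t/sin t"
    using t by (cases "t < 0") (auto simp: x_def)
  have e2: "x^(2*m+2) = t^(2*m+2) / pi^(2*m+2)" for m
  proof -
    have "x^(2*m+2) = \<bar>t\<bar>^(2*m+2) / pi^(2*m+2)" by (simp add: x_def power_divide)
    also have "\<bar>t\<bar>^(2*m+2) = t^(2*m+2)" by (simp add: power_even_abs)
    finally show ?thesis .
  qed
  have "(\<lambda>m. -(2 * Z (2*m+2) * x^(2*m+2))) sums (-(1 - t*cos t/sin t))"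
    using sums_minus[OF cot_zeta[OF x]] unfolding e1 .
  moreover have "-(2 * Z (2*m+2) * x^(2*m+2)) = alpha (2*m+2) * t^(2*m+2)" for m
    unfolding e2 by (simp add: alpha_def)
  ultimately have s1: "(\<lambda>m. alpha (2*m+2) * t^(2*m+2)) sums (t*cos t/sin t - 1)"
    by simp
  define f where "f n = (if n = 0 then 0 else alpha n * t^n)" for n
  have "(\<lambda>m. f (2*m+2)) sums (t*cos t/sin t - 1)" using s1 by (simp add: f_def)
  hence s2: "f sums (t*cos t/sin t - 1)"
  proof (subst (asm) sums_mono_reindex)
    show "strict_mono (\<lambda>m::nat. 2*m+2)" by (auto simp: strict_mono_def)
    fix n assume "n \<notin> range (\<lambda>m::nat. 2*m+2)"
    hence "n = 0 \<or> odd n"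
    proof (cases "n = 0 \<or> odd n")
      case False
      then obtain m where "n = 2*m" "m \<ge> 1" by (auto elim!: evenE)
      hence "n = 2*(m-1)+2" by simp
      thus ?thesis using \<open>n \<notin> _\<close> by blast
    qed auto
    thus "f n = 0" by (auto simp: f_def alpha_def)
  qed
  have s3: "(\<lambda>n. if n = 0 then alpha n * t^n else 0) sums (alpha 0 * t^0)"
    by (rule sums_single)
  have "(\<lambda>n. f n + (if n = 0 then alpha n * t^n else 0)) sums (t*cos t/sin t - 1 + alpha 0 * t^0)"
    by (rule sums_add[OF s2 s3])
  moreover have "(\<lambda>n. f n + (if n = 0 then alpha n * t^n else 0)) = (\<lambda>n. alpha n * t^n)"
    by (auto simp: f_def)
  ultimately show ?thesis by (simp add: alpha_def)
qed


lemma fps_nth_conv_deriv_real: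
  fixes f :: "real fps"
  assumes "fps_conv_radius f > 0"
  shows   "fps_nth f n = (deriv ^^ n) (eval_fps f) 0 / fact n"
  using assms
proof (induction n arbitrary: f)
  case 0
  thus ?case by (simp add: eval_fps_def)
next
  case (Suc n f)
  have "(deriv ^^ Suc n) (eval_fps f) 0 = (deriv ^^ n) (deriv (eval_fps f)) 0"
    unfolding funpow_Suc_right o_def ..
  also have "eventually (\<lambda>z::real. z \<in> eball 0 (fps_conv_radius f)) (nhds 0)"
    using Suc.prems by (intro eventually_nhds_in_open) (auto simp: zero_ereal_def)
  hence "eventually (\<lambda>z. deriv (eval_fps f) z = eval_fps (fps_deriv f) z) (nhds 0)"
    by eventually_elim (simp add: eval_fps_deriv)
  hence "(deriv ^^ n) (deriv (eval_fps f)) 0 = (deriv ^^ n) (eval_fps (fps_deriv f)) 0"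
    by (intro higher_deriv_cong_ev refl)
  also have "\<dots> / fact n = fps_nth (fps_deriv f) n"
    using Suc.prems fps_conv_radius_deriv[of f]
    by (intro Suc.IH [symmetric]) auto
  also have "\<dots> / of_nat (Suc n) = fps_nth f (Suc n)"
    by (simp add: fps_deriv_def del: of_nat_Suc)
  finally show ?case by (simp add: field_split_simps)
qed

lemma fps_expansion_unique_real:
  fixes f :: "real \<Rightarrow> real"
  assumes "f has_fps_expansion F" "f has_fps_expansion G"
  shows "F = G"
proof (rule fps_ext)
  fix n :: nat
  have "fps_nth F n = (deriv ^^ n) (eval_fps F) 0 / fact n"
    using assms by (intro fps_nth_conv_deriv_real) (auto simp: has_fps_expansion_def)
  also have "(deriv ^^ n) (eval_fps F) 0 = (deriv ^^ n) f 0"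
    using assms by (intro higher_deriv_cong_ev) (auto simp: has_fps_expansion_def)
  also have "\<dots> = (deriv ^^ n) (eval_fps G) 0"
    using assms by (intro higher_deriv_cong_ev) (auto simp: has_fps_expansion_def eq_commute)
  also have "\<dots> / fact n = fps_nth G n"
    using assms by (intro fps_nth_conv_deriv_real [symmetric]) (auto simp: has_fps_expansion_def)
  finally show "fps_nth F n = fps_nth G n" .
qed

definition phi :: "real \<Rightarrow> real" where "phi t = (if t = 0 then 1 else t * cos t / sin t)"

lemma phi_alpha: "phi has_fps_expansion Abs_fps alpha"
proof (rule has_fps_expansionI)
  have "eventually (\<lambda>u::real. u \<in> ball 0 pi) (nhds 0)"
    by (intro eventually_nhds_in_open) auto
  thus "eventually (\<lambda>u. (\<lambda>n. fps_nth (Abs_fps alpha) n * u ^ n) sums phi u) (nhds 0)"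
  proof eventually_elim
    case (elim u)
    show ?case
    proof (cases "u = 0")
      case True
      thus ?thesis using powser_sums_zero[of alpha] by (simp add: phi_def alpha_def)
    next
      case False
      thus ?thesis using alpha_sums[of u] elim by (simp add: phi_def)
    qed
  qed
qed

lemma phi_Gf: "phi has_fps_expansion Gf"
proof -
  have e1: "(\<lambda>x. if x = 0 then fps_nth (fps_X * fps_cos 1) (subdegree (fps_sin (1::real))) / fps_nth (fps_sin 1) (subdegree (fps_sin (1::real)))
             else (x::real) * cos x / sin x) has_fps_expansion (fps_X * fps_cos 1 / fps_sin 1)"
  proof (rule has_fps_expansion_divide)
    show "(\<lambda>x. x * cos x) has_fps_expansion fps_X * fps_cos (1::real)"
      by (intro has_fps_expansion_mult has_fps_expansion_fps_X has_fps_expansion_cos')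
    show "sin has_fps_expansion fps_sin (1::real)" by (rule has_fps_expansion_sin')
  qed (use Xcos_subdeg sin_subdeg sin_nz in auto)
  have e2: "fps_nth (fps_X * fps_cos 1) (subdegree (fps_sin (1::real))) / fps_nth (fps_sin 1) (subdegree (fps_sin (1::real))) = 1"
    unfolding sin_subdeg by (simp add: fps_sin_def fps_cos_def)
  show ?thesis using e1 unfolding e2 by (simp add: phi_def[abs_def] Gf_def)
qed

lemma alpha_Gf: "alpha n = fps_nth Gf n"
  using fps_expansion_unique_real[OF phi_alpha phi_Gf] by (metis fps_nth_Abs_fps)

lemma bernoulli_Z:
  assumes "m \<ge> 1"
  shows "bernoulli (2*m) = fact (2*m) * (-2 * Z (2*m) / pi^(2*m)) / (-4)^m"
  using bernoulli_Gf[OF assms] alpha_Gf[of "2*m"] assms by (simp add: alpha_def)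

lemma abs_bernoulli_Z:
  assumes "m \<ge> 1"
  shows "\<bar>bernoulli (2*m)\<bar> = 2 * fact (2*m) * Z (2*m) / (4^m * pi^(2*m))"
proof -
  have Zp: "Z (2*m) > 0" using assms by (intro Z_pos) auto
  have "\<bar>bernoulli (2*m)\<bar> = fact (2*m) * (2 * Z (2*m) / pi^(2*m)) / 4^m"
    unfolding bernoulli_Z[OF assms] using Zp by (simp add: abs_mult power_abs)
  thus ?thesis by (simp add: field_simps)
qed

lemma coeff_Z:
  "real j * 2^(2*j+3) * \<bar>bernoulli (2*j+2)\<bar> / fact (2*j+2) = 4 * real j * Z (2*j+2) / pi^(2*j+2)"
proof -
  have jj: "2*j+2 = 2*(j+1)" by simp
  have "\<bar>bernoulli (2*j+2)\<bar> = 2 * fact (2*j+2) * Z (2*j+2) / (4^(j+1) * pi^(2*j+2))"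
    unfolding jj by (rule abs_bernoulli_Z) simp
  moreover have "(2::real)^(2*j+3) = 2 * 4^(j+1)"
    by (simp add: power_add power_mult)
  moreover have "\<And>F P Q Z::real. F \<noteq> 0 \<Longrightarrow> P \<noteq> 0 \<Longrightarrow> Q \<noteq> 0 \<Longrightarrow>
     real j * (2 * P) * (2 * F * Z / (P * Q)) / F = 4 * real j * Z / Q"
    by (simp add: field_simps)
  ultimately show ?thesis by simp
qed


definition Qf :: "nat \<Rightarrow> real \<Rightarrow> real" where
  "Qf N u = 4/(1-u)^2 + 4*(real N - 1)/(1-u)"

lemma inv_sq_lt:
  fixes u v :: real assumes "u < v" "v < 1"
  shows "1/(1-u)^2 < 1/(1-v)^2"
proof -
  have "(1-v)^2 < (1-u)^2" using assms by (intro power_strict_mono) auto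
  thus ?thesis using assms by (intro divide_strict_left_mono) auto
qed

lemma Q_mono:
  assumes "N \<ge> 1" "u < v" "v < 1"
  shows "Qf N u < Qf N v"
proof -
  have a: "4/(1-u)^2 < 4/(1-v)^2" using inv_sq_lt[OF assms(2,3)] by simp
  have "1/(1-u) \<le> 1/(1-v)" using assms by (intro divide_left_mono) auto
  hence "4*(real N - 1) * (1/(1-u)) \<le> 4*(real N - 1) * (1/(1-v))"
    using assms by (intro mult_left_mono) auto
  thus ?thesis using a unfolding Qf_def by simp
qed

lemma Q_gt:
  assumes "N \<ge> 1" "0 < u" "u < 1"
  shows "Qf N u > 4 * real N"
proof -
  have h: "1 < 1/(1-u)^2" using inv_sq_lt[of 0 u] assms by simp
  have "4/(1-u)^2 = 4 * (1/(1-u)^2)" by simp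
  hence a: "4 < 4/(1-u)^2" using h by linarith
  have "1/(1-0) \<le> 1/(1-u)" using assms by (intro divide_left_mono) auto
  hence "4*(real N - 1) * (1/(1-0)) \<le> 4*(real N - 1) * (1/(1-u))"
    using assms by (intro mult_left_mono) auto
  thus ?thesis using a unfolding Qf_def by simp
qed

lemma Q_le:
  assumes "N \<ge> 1" "0 \<le> u" "u \<le> 1/4"
  shows "Qf N u \<le> 4 * real N + 8 * (real N + 1) * u"
proof -
  have p: "1 - u > 0" using assms by simp
  have a: "1/(1-u)^2 \<le> 1 + 4*u"
  proof -
    have "1 \<le> (1 + 4*u) * (1-u)^2"
    proof -
      have "(1 + 4*u) * (1-u)^2 = 1 + u * (2 - 7*u + 4*u^2)" by (simp add: algebra_simps power2_eq_square)
      moreover have "2 - 7*u + 4*u^2 \<ge> 0" using assms zero_le_power2[of u] by linarith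
      ultimately show ?thesis using assms by (simp add: mult_nonneg_nonneg)
    qed
    thus ?thesis using p by (simp add: field_simps)
  qed
  have b: "1/(1-u) \<le> 1 + 2*u"
  proof -
    have "u*(1-2*u) \<ge> 0" using assms by (intro mult_nonneg_nonneg) auto
    hence "1 \<le> (1 + 2*u) * (1-u)" by (simp add: algebra_simps)
    thus ?thesis using p by (simp add: field_simps)
  qed
  have "4*(real N - 1)/(1-u) = 4*(real N - 1) * (1/(1-u))" by simp
  also have "\<dots> \<le> 4*(real N - 1) * (1 + 2*u)" using b assms by (intro mult_left_mono) auto
  finally have c: "4*(real N - 1)/(1-u) \<le> 4*(real N - 1) * (1 + 2*u)" .
  have "4/(1-u)^2 \<le> 4 * (1 + 4*u)" using a by simp
  with c have "Qf N u \<le> 4 * (1 + 4*u) + 4*(real N - 1) * (1 + 2*u)" unfolding Qf_def by simp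
  also have "\<dots> = 4 * real N + 8 * (real N + 1) * u" by (simp add: algebra_simps)
  finally show ?thesis .
qed

lemma R_identity:
  fixes u :: real assumes "u \<noteq> 1"
  shows "4*u^2/(1-u)^2 - (\<Sum>j=1..M. 4*real j*u^(j+1)) = u^(Suc M+1) * Qf (Suc M) u"
proof (induction M)
  case 0
  thus ?case by (simp add: Qf_def power2_eq_square)
next
  case (Suc M)
  have p: "1 - u \<noteq> 0" using assms by simp
  have key: "Qf (Suc M) u - 4 * real (Suc M) = u * Qf (Suc (Suc M)) u"
    using p unfolding Qf_def by (simp add: field_simps) (simp add: algebra_simps power2_eq_square)
  have "4*u^2/(1-u)^2 - (\<Sum>j=1..Suc M. 4*real j*u^(j+1))
      = (4*u^2/(1-u)^2 - (\<Sum>j=1..M. 4*real j*u^(j+1))) - 4*real (Suc M)*u^(Suc M+1)"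
    by (simp add: sum.cl_ivl_Suc)
  also have "\<dots> = u^(Suc M+1) * (Qf (Suc M) u - 4 * real (Suc M))"
    unfolding Suc.IH by (simp add: algebra_simps)
  also have "\<dots> = u^(Suc (Suc M)+1) * Qf (Suc (Suc M)) u"
    unfolding key by simp
  finally show ?case .
qed


lemma upow: "(x^2/(real k+1)^2)^(j+1) = x^(2*j+2) * (1/(real k+1)^(2*j+2))"
proof -
  have mm: "2*j+2 = 2*(j+1)" by simp
  show ?thesis unfolding mm power_divide power_mult by simp
qed

lemma sums_less:
  fixes f g :: "nat \<Rightarrow> real"
  assumes "f sums a" "g sums b" "\<And>k. f k < g k"
  shows "a < b"
proof -
  have d: "(\<lambda>k. g k - f k) sums (b - a)" by (rule sums_diff[OF assms(2,1)])
  have "0 < (\<Sum>k. g k - f k)" by (rule suminf_pos) (use sums_summable[OF d] assms(3) in auto)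
  moreover from d have "(\<Sum>k. g k - f k) = b - a" by (simp add: sums_iff)
  ultimately show ?thesis by simp
qed

lemma lambda_eq: "lambda_N N = 4 * real N * Z (2*N+2) / pi^(2*N+2)"
  unfolding lambda_N_def by (rule coeff_Z)

lemma F_series:
  assumes N: "N \<ge> 1" and x: "0 < x" "x < 1"
  shows "(\<lambda>k. (x^2/(real k+1)^2)^(N+1) * Qf N (x^2/(real k+1)^2)) sums F_N N (pi*x)"
proof -
  obtain M where M: "N = Suc M" using N by (cases N) auto
  define u where "u k = x^2/(real k+1)^2" for k
  have K: "x^2 < (real k+1)^2" for k using x by (intro power_strict_mono) auto
  have u1: "u k \<noteq> 1" for k using K[of k] by (auto simp: u_def)
  have s0: "(\<lambda>k. 4*x^4/((real k+1)^2 - x^2)^2) sums ((pi*x/sin(pi*x))^2 + pi*x/tan(pi*x) - 2)"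
    by (rule f_series[OF x])
  have e0: "4*x^4/((real k+1)^2 - x^2)^2 = 4*(u k)^2/(1 - u k)^2" for k
  proof -
    have d: "(real k+1)^2 - x^2 \<noteq> 0" using K[of k] by simp
    have d2: "(real k+1)^2 \<noteq> 0" by simp
    have q: "u k/(1 - u k) = x^2/((real k+1)^2 - x^2)"
      unfolding u_def using d d2 by (simp add: field_simps)
    have "4*(u k)^2/(1 - u k)^2 = 4*(u k/(1 - u k))^2" by (simp add: power_divide)
    also have "\<dots> = 4*x^4/((real k+1)^2 - x^2)^2" unfolding q by (simp add: power_divide power2_eq_square power4_eq_xxxx)
    finally show ?thesis by simp
  qed
  have sj: "(\<lambda>k. 4*real j*(u k)^(j+1)) sums
             (real j * 2^(2*j+3) * \<bar>bernoulli (2*j+2)\<bar> / fact (2*j+2) * (pi*x)^(2*j+2))" for j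
  proof -
    have "(\<lambda>k. (4*real j*x^(2*j+2)) * (1/(real k+1)^(2*j+2))) sums ((4*real j*x^(2*j+2)) * Z (2*j+2))"
      by (intro sums_mult Z_sums) auto
    moreover have "(4*real j*x^(2*j+2)) * Z (2*j+2)
        = real j * 2^(2*j+3) * \<bar>bernoulli (2*j+2)\<bar> / fact (2*j+2) * (pi*x)^(2*j+2)"
      unfolding coeff_Z by (simp add: power_mult_distrib)
    moreover have "4*real j*(u k)^(j+1) = (4*real j*x^(2*j+2)) * (1/(real k+1)^(2*j+2))" for k
      unfolding u_def upow by (simp add: mult_ac)
    ultimately show ?thesis by (simp only:)
  qed
  have ss: "(\<lambda>k. \<Sum>j=1..M. 4*real j*(u k)^(j+1)) sums
      (\<Sum>j=1..M. real j * 2^(2*j+3) * \<bar>bernoulli (2*j+2)\<bar> / fact (2*j+2) * (pi*x)^(2*j+2))"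
    by (rule sums_sum) (rule sj)
  have sd: "(\<lambda>k. 4*(u k)^2/(1 - u k)^2 - (\<Sum>j=1..M. 4*real j*(u k)^(j+1))) sums
      (((pi*x/sin(pi*x))^2 + pi*x/tan(pi*x) - 2) -
       (\<Sum>j=1..M. real j * 2^(2*j+3) * \<bar>bernoulli (2*j+2)\<bar> / fact (2*j+2) * (pi*x)^(2*j+2)))"
    using sums_diff[OF s0 ss] unfolding e0 .
  have eqF: "F_N N (pi*x) = ((pi*x/sin(pi*x))^2 + pi*x/tan(pi*x) - 2) -
       (\<Sum>j=1..M. real j * 2^(2*j+3) * \<bar>bernoulli (2*j+2)\<bar> / fact (2*j+2) * (pi*x)^(2*j+2))"
    unfolding F_N_def M by simp
  have eqR: "4*(u k)^2/(1 - u k)^2 - (\<Sum>j=1..M. 4*real j*(u k)^(j+1)) = (u k)^(N+1) * Qf N (u k)" for k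
    unfolding M by (rule R_identity[OF u1])
  show ?thesis using sd unfolding eqR eqF[symmetric] unfolding u_def .
qed

lemma lam_sums:
  shows "(\<lambda>k. (x^2/(real k+1)^2)^(N+1) * (4*real N)) sums (lambda_N N * (pi*x)^(2*N+2))"
proof -
  have "(\<lambda>k. (4*real N*x^(2*N+2)) * (1/(real k+1)^(2*N+2))) sums ((4*real N*x^(2*N+2)) * Z (2*N+2))"
    by (intro sums_mult Z_sums) auto
  moreover have "(4*real N*x^(2*N+2)) * Z (2*N+2) = lambda_N N * (pi*x)^(2*N+2)"
    unfolding lambda_eq by (simp add: power_mult_distrib)
  moreover have "(x^2/(real k+1)^2)^(N+1) * (4*real N) = (4*real N*x^(2*N+2)) * (1/(real k+1)^(2*N+2))" for k
    unfolding upow by (simp add: mult_ac)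
  ultimately show ?thesis by (simp only:)
qed


lemma a_bound:
  "0 < 1 / (real (Suc k)^p * (4 * real (Suc k)^2 - 1)^2) \<and>
   1 / (real (Suc k)^p * (4 * real (Suc k)^2 - 1)^2) \<le> 1/(real k+1)^2"
proof -
  define K where "K = real (Suc k)"
  have K1: "K \<ge> 1" by (simp add: K_def)
  have KK: "K^2 \<ge> K" using K1 by (simp add: power2_eq_square)
  have D: "4*K^2 - 1 \<ge> K" using K1 KK by linarith
  have D2: "(4*K^2 - 1)^2 \<ge> K^2" using D K1 by (intro power_mono) auto
  have P: "K^p \<ge> 1" using K1 by (rule one_le_power)
  have "K^2 \<le> K^p * (4*K^2 - 1)^2"
  proof -
    have "K^2 = 1 * K^2" by simp
    also have "\<dots> \<le> K^p * (4*K^2 - 1)^2" using P D2 by (intro mult_mono) auto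
    finally show ?thesis .
  qed
  moreover have "K^2 > 0" using K1 by simp
  moreover have pos: "K^p * (4*K^2 - 1)^2 > 0" using P D K1 by (intro mult_pos_pos) auto
  ultimately have "1 / (K^p * (4*K^2 - 1)^2) \<le> 1 / K^2" by (intro divide_left_mono) auto
  moreover have "0 < 1 / (K^p * (4*K^2 - 1)^2)" using pos by simp
  moreover have "K = real k + 1" by (simp add: K_def)
  ultimately show ?thesis unfolding K_def by (simp add: add_ac)
qed

lemma a_summable: "summable (\<lambda>k. 1 / (real (Suc k)^p * (4 * real (Suc k)^2 - 1)^2))"
proof (rule summable_comparison_test')
  show "summable (\<lambda>k. 1/(real k+1)^2)" using Z_sums[of 2] by (simp add: sums_iff)
  fix k show "norm (1 / (real (Suc k)^p * (4 * real (Suc k)^2 - 1)^2)) \<le> 1/(real k+1)^2"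
    using a_bound[of k p] by simp
qed

lemma mu_sums:
  "(\<lambda>k. x^(2*N+2) * (64*real N * (1 / (real (Suc k)^(2*N-2) * (4 * real (Suc k)^2 - 1)^2))
          - 16*(real N - 1) * (1 / (real (Suc k)^(2*N) * (4 * real (Suc k)^2 - 1)^2))))
   sums (mu_N N * (pi*x)^(2*N+2))"
proof -
  define S1 where "S1 = (\<Sum>k. 1 / (real (Suc k)^(2*N-2) * (4 * real (Suc k)^2 - 1)^2))"
  define S2 where "S2 = (\<Sum>k. 1 / (real (Suc k)^(2*N) * (4 * real (Suc k)^2 - 1)^2))"
  have s1: "(\<lambda>k. 1 / (real (Suc k)^(2*N-2) * (4 * real (Suc k)^2 - 1)^2)) sums S1"
    unfolding S1_def by (rule summable_sums[OF a_summable])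
  have s2: "(\<lambda>k. 1 / (real (Suc k)^(2*N) * (4 * real (Suc k)^2 - 1)^2)) sums S2"
    unfolding S2_def by (rule summable_sums[OF a_summable])
  have s: "(\<lambda>k. x^(2*N+2) * (64*real N * (1 / (real (Suc k)^(2*N-2) * (4 * real (Suc k)^2 - 1)^2))
          - 16*(real N - 1) * (1 / (real (Suc k)^(2*N) * (4 * real (Suc k)^2 - 1)^2))))
        sums (x^(2*N+2) * (64*real N * S1 - 16*(real N - 1) * S2))"
    by (intro sums_mult sums_diff s1 s2)
  have eq: "x^(2*N+2) * (64*real N * S1 - 16*(real N - 1) * S2) = mu_N N * (pi*x)^(2*N+2)"
  proof -
    have "pi^(2*N+2) > 0" by simp
    thus ?thesis unfolding mu_N_def S1_def[symmetric] S2_def[symmetric]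
      by (simp add: power_mult_distrib field_simps)
  qed
  show ?thesis using s unfolding eq .
qed

lemma W_Q_aux:
  fixes K P M :: real
  assumes "K > 0" "P > 0" "4*K^2 - 1 > 0"
  shows "64*(M+1) * (1/(P*(4*K^2-1)^2)) - 16*M * (1/(P*K^2*(4*K^2-1)^2))
        = (4/(1 - 1/(4*K^2))^2 + 4*M/(1 - 1/(4*K^2))) * (1/(P*K^4))"
proof -
  define D where "D = 4*K^2 - 1"
  have Dp: "D > 0" using assms by (simp add: D_def)
  have e: "1 - 1/(4*K^2) = D/(4*K^2)" using assms by (simp add: field_simps D_def)
  have r1: "4/(D/(4*K^2))^2 = 64*K^4/D^2" using Dp assms
    by (simp add: power_divide power_mult_distrib power4_eq_xxxx power2_eq_square)
  have r2: "4*M/(D/(4*K^2)) = 16*M*K^2/D" by simp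
  have r3: "(64*K^4/D^2 + 16*M*K^2/D) * (1/(P*K^4)) = 64/(P*D^2) + 16*M/(P*K^2*D)"
    using Dp assms by (simp add: field_simps power4_eq_xxxx power2_eq_square)
  have r4: "64*(M+1) * (1/(P*D^2)) - 16*M * (1/(P*K^2*D^2)) - (64/(P*D^2) + 16*M/(P*K^2*D))
        = 16*M*(4*K^2 - 1 - D) / (P*K^2*D^2)"
    using Dp assms by (simp add: field_simps power2_eq_square)
  have "64*(M+1) * (1/(P*D^2)) - 16*M * (1/(P*K^2*D^2)) = 64/(P*D^2) + 16*M/(P*K^2*D)"
    using r4 by (simp add: D_def)
  thus ?thesis unfolding e r1 r2 r3 D_def[symmetric] .
qed

lemma W_Q:
  assumes "N \<ge> 1"
  shows "64*real N * (1 / (real (Suc k)^(2*N-2) * (4 * real (Suc k)^2 - 1)^2))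
          - 16*(real N - 1) * (1 / (real (Suc k)^(2*N) * (4 * real (Suc k)^2 - 1)^2))
       = Qf N (1/(4*(real k+1)^2)) * (1/(real k+1)^(2*N+2))"
proof -
  obtain M where M: "N = Suc M" using assms by (cases N) auto
  define K where "K = real k + 1"
  define P where "P = K^(2*M)"
  have K: "K > 0" by (simp add: K_def)
  have P: "P > 0" using K by (simp add: P_def)
  have D: "4*K^2 - 1 > 0"
  proof -
    have "K \<ge> 1" by (simp add: K_def)
    hence "K^2 \<ge> 1" by simp
    thus ?thesis by linarith
  qed
  have e1: "real (Suc k) = K" by (simp add: K_def)
  have e2: "2*N-2 = 2*M" "2*N = 2*M+2" "2*N+2 = 2*M+4" using M by auto
  have e3: "K^(2*M+2) = P*K^2" "K^(2*M+4) = P*K^4" unfolding P_def power_add by simp_all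
  have L: "64*real N * (1 / (real (Suc k)^(2*N-2) * (4 * real (Suc k)^2 - 1)^2))
          - 16*(real N - 1) * (1 / (real (Suc k)^(2*N) * (4 * real (Suc k)^2 - 1)^2))
        = 64*(real M+1) * (1/(P*(4*K^2-1)^2)) - 16*real M * (1/(P*K^2*(4*K^2-1)^2))"
    unfolding e1 e2 e3 by (simp add: M add_ac P_def)
  have R: "Qf N (1/(4*(real k+1)^2)) * (1/(real k+1)^(2*N+2))
        = (4/(1 - 1/(4*K^2))^2 + 4*real M/(1 - 1/(4*K^2))) * (1/(P*K^4))"
    unfolding K_def[symmetric] unfolding e2 unfolding e3 by (simp add: Qf_def M power2_eq_square P_def power4_eq_xxxx mult_ac)
  show ?thesis unfolding L R by (rule W_Q_aux[OF K P D])
qed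


lemma u_le: "x^2/(real k+1)^2 \<le> (x::real)^2"
proof -
  have "x^2/(real k+1)^2 \<le> x^2/1" by (intro divide_left_mono) auto
  thus ?thesis by simp
qed

lemma F_upper:
  assumes N: "N \<ge> 1" and x: "0 < x" "x \<le> 1/2"
  shows "F_N N (pi*x) \<le> (4*real N + 8*(real N+1)*x^2) * Z (2*N+2) * x^(2*N+2)"
proof -
  define C where "C = 4*real N + 8*(real N+1)*x^2"
  have sF: "(\<lambda>k. (x^2/(real k+1)^2)^(N+1) * Qf N (x^2/(real k+1)^2)) sums F_N N (pi*x)"
    using x by (intro F_series N) auto
  have sC: "(\<lambda>k. (x^2/(real k+1)^2)^(N+1) * C) sums (C * Z (2*N+2) * x^(2*N+2))"
  proof -
    have "(\<lambda>k. (C*x^(2*N+2)) * (1/(real k+1)^(2*N+2))) sums ((C*x^(2*N+2)) * Z (2*N+2))"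
      by (intro sums_mult Z_sums) auto
    moreover have "(x^2/(real k+1)^2)^(N+1) * C = (C*x^(2*N+2)) * (1/(real k+1)^(2*N+2))" for k
      unfolding upow by (simp add: mult_ac)
    moreover have "(C*x^(2*N+2)) * Z (2*N+2) = C * Z (2*N+2) * x^(2*N+2)" by (simp add: mult_ac)
    ultimately show ?thesis by (simp only:)
  qed
  have le: "(x^2/(real k+1)^2)^(N+1) * Qf N (x^2/(real k+1)^2) \<le> (x^2/(real k+1)^2)^(N+1) * C" for k
  proof (rule mult_left_mono)
    have ux: "x^2/(real k+1)^2 \<le> x^2" by (rule u_le)
    have x2: "x^2 \<le> 1/4"
    proof -
      have "x^2 \<le> (1/2)^2" using x by (intro power_mono) auto
      thus ?thesis by (simp add: power2_eq_square)
    qed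
    have "Qf N (x^2/(real k+1)^2) \<le> 4*real N + 8*(real N+1)*(x^2/(real k+1)^2)"
    proof (rule Q_le[OF N])
      show "0 \<le> x^2/(real k+1)^2" by simp
      show "x^2/(real k+1)^2 \<le> 1/4" using ux x2 by linarith
    qed
    also have "\<dots> \<le> C" unfolding C_def using ux by (intro add_left_mono mult_left_mono) auto
    finally show "Qf N (x^2/(real k+1)^2) \<le> C" .
  qed simp
  show ?thesis using sums_le[OF le sF sC] by (simp add: C_def)
qed

lemma F_half:
  assumes N: "N \<ge> 1"
  shows "F_N N (pi/2) = mu_N N * (pi/2)^(2*N+2)"
proof -
  have sF: "(\<lambda>k. ((1/2)^2/(real k+1)^2)^(N+1) * Qf N ((1/2)^2/(real k+1)^2)) sums F_N N (pi*(1/2))"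
    by (intro F_series N) auto
  have sM: "(\<lambda>k. (1/2)^(2*N+2) * (64*real N * (1 / (real (Suc k)^(2*N-2) * (4 * real (Suc k)^2 - 1)^2))
          - 16*(real N - 1) * (1 / (real (Suc k)^(2*N) * (4 * real (Suc k)^2 - 1)^2))))
       sums (mu_N N * (pi*(1/2))^(2*N+2))"
    by (rule mu_sums)
  have eq: "((1/2)^2/(real k+1)^2)^(N+1) * Qf N ((1/2)^2/(real k+1)^2) =
        (1/2)^(2*N+2) * (64*real N * (1 / (real (Suc k)^(2*N-2) * (4 * real (Suc k)^2 - 1)^2))
          - 16*(real N - 1) * (1 / (real (Suc k)^(2*N) * (4 * real (Suc k)^2 - 1)^2)))" for k
  proof -
    have w: "(1/2::real)^2/(real k+1)^2 = 1/(4*(real k+1)^2)" by (simp add: power2_eq_square)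
    show ?thesis unfolding W_Q[OF N] upow unfolding w by (simp add: mult_ac)
  qed
  have "F_N N (pi*(1/2)) = mu_N N * (pi*(1/2))^(2*N+2)"
    using sums_unique2[OF sF sM[folded eq]] .
  thus ?thesis by simp
qed


theorem theorem6:
  fixes N :: nat
  assumes "N \<ge> 1"
  shows "(\<forall>t::real. 0 < t \<and> t < pi/2 \<longrightarrow>
            lambda_N N * t^(2*N+2) < F_N N t \<and> F_N N t < mu_N N * t^(2*N+2))
       \<and> (\<forall>c::real. (\<forall>t::real. 0 < t \<and> t < pi/2 \<longrightarrow> c * t^(2*N+2) < F_N N t) \<longrightarrow> c \<le> lambda_N N)
       \<and> (\<forall>c::real. (\<forall>t::real. 0 < t \<and> t < pi/2 \<longrightarrow> F_N N t < c * t^(2*N+2)) \<longrightarrow> mu_N N \<le> c)"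
proof (intro conjI allI impI)
  note N = assms
  fix t :: real assume t: "0 < t \<and> t < pi/2"
  define x where "x = t/pi"
  have x: "0 < x" "x < 1/2" using t pi_gt_zero by (auto simp: x_def field_simps)
  have tx: "t = pi*x" by (simp add: x_def)
  have sF: "(\<lambda>k. (x^2/(real k+1)^2)^(N+1) * Qf N (x^2/(real k+1)^2)) sums F_N N (pi*x)"
    using x by (intro F_series N) auto
  have upos: "0 < x^2/(real k+1)^2" for k using x by simp
  have ult: "x^2/(real k+1)^2 < 1/(4*(real k+1)^2)" for k
  proof -
    have "x^2 < (1/2)^2" using x by (intro power_strict_mono) auto
    hence "x^2 < 1/4" by (simp add: power2_eq_square)
    hence "x^2/(real k+1)^2 < (1/4)/(real k+1)^2" by (intro divide_strict_right_mono) auto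
    thus ?thesis by simp
  qed
  have wlt: "1/(4*(real k+1)^2) < 1" for k
  proof -
    have "(real k+1)^2 \<ge> 1" by simp
    hence "4*(real k+1)^2 > 1" by linarith
    thus ?thesis by simp
  qed
  have "lambda_N N * (pi*x)^(2*N+2) < F_N N (pi*x)"
  proof (rule sums_less[OF lam_sums sF])
    fix k
    show "(x^2/(real k+1)^2)^(N+1) * (4*real N) < (x^2/(real k+1)^2)^(N+1) * Qf N (x^2/(real k+1)^2)"
    proof (rule mult_strict_left_mono)
      have "x^2/(real k+1)^2 < 1" using ult[of k] wlt[of k] by linarith
      thus "4*real N < Qf N (x^2/(real k+1)^2)" using upos[of k] by (intro Q_gt N) auto
      show "0 < (x^2/(real k+1)^2)^(N+1)" using upos[of k] by (rule zero_less_power)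
    qed
  qed
  moreover have "F_N N (pi*x) < mu_N N * (pi*x)^(2*N+2)"
  proof (rule sums_less[OF sF mu_sums])
    fix k
    have "(x^2/(real k+1)^2)^(N+1) * Qf N (x^2/(real k+1)^2) < (x^2/(real k+1)^2)^(N+1) * Qf N (1/(4*(real k+1)^2))"
    proof (rule mult_strict_left_mono)
      show "Qf N (x^2/(real k+1)^2) < Qf N (1/(4*(real k+1)^2))"
        using ult[of k] wlt[of k] by (intro Q_mono N)
      show "0 < (x^2/(real k+1)^2)^(N+1)" using upos[of k] by (rule zero_less_power)
    qed
    also have "\<dots> = x^(2*N+2) * (Qf N (1/(4*(real k+1)^2)) * (1/(real k+1)^(2*N+2)))"
      unfolding upow by (simp add: mult_ac)
    also have "\<dots> = x^(2*N+2) * (64*real N * (1 / (real (Suc k)^(2*N-2) * (4 * real (Suc k)^2 - 1)^2))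
          - 16*(real N - 1) * (1 / (real (Suc k)^(2*N) * (4 * real (Suc k)^2 - 1)^2)))"
      unfolding W_Q[OF N] ..
    finally show "(x^2/(real k+1)^2)^(N+1) * Qf N (x^2/(real k+1)^2) < \<dots>" .
  qed
  ultimately show "lambda_N N * t^(2*N+2) < F_N N t" "F_N N t < mu_N N * t^(2*N+2)"
    unfolding tx by auto
next
  note N = assms
  fix c :: real
  assume H: "\<forall>t::real. 0 < t \<and> t < pi/2 \<longrightarrow> c * t^(2*N+2) < F_N N t"
  show "c \<le> lambda_N N"
  proof (rule ccontr)
    assume "\<not> c \<le> lambda_N N"
    hence cl: "c > lambda_N N" by simp
    define Zc where "Zc = Z (2*N+2)"
    have Zp: "Zc > 0" unfolding Zc_def by (intro Z_pos) auto
    define e where "e = (c - lambda_N N) * pi^(2*N+2) / (8*(real N+1)*Zc)"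
    have ep: "e > 0" unfolding e_def using cl Zp by (intro divide_pos_pos mult_pos_pos) auto
    define x where "x = min (1/4) (sqrt e)"
    have x: "0 < x" "x \<le> 1/4" using ep by (auto simp: x_def)
    have xe: "x^2 \<le> e"
    proof -
      have "x \<le> sqrt e" by (simp add: x_def)
      hence "x^2 \<le> (sqrt e)^2" using x by (intro power_mono) auto
      thus ?thesis using ep by simp
    qed
    have t: "0 < pi*x \<and> pi*x < pi/2" using x pi_gt_zero by auto
    have "c * (pi*x)^(2*N+2) < F_N N (pi*x)" using H t by blast
    also have "\<dots> \<le> (4*real N + 8*(real N+1)*x^2) * Zc * x^(2*N+2)"
      unfolding Zc_def using x by (intro F_upper N) auto
    finally have "c * pi^(2*N+2) * x^(2*N+2) < (4*real N + 8*(real N+1)*x^2) * Zc * x^(2*N+2)"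
      by (simp add: power_mult_distrib mult_ac)
    hence h1: "c * pi^(2*N+2) < (4*real N + 8*(real N+1)*x^2) * Zc"
      using x by (simp add: mult_less_cancel_right)
    have h2: "(4*real N + 8*(real N+1)*x^2) * Zc = lambda_N N * pi^(2*N+2) + 8*(real N+1)*Zc*x^2"
      unfolding lambda_eq Zc_def by (simp add: algebra_simps)
    have h3: "8*(real N+1)*Zc*x^2 \<le> 8*(real N+1)*Zc*e"
      using xe Zp by (intro mult_left_mono) auto
    have h4: "8*(real N+1)*Zc*e = (c - lambda_N N) * pi^(2*N+2)"
    proof -
      have nz: "8*(real N+1)*Zc \<noteq> 0" using Zp by simp
      show ?thesis unfolding e_def
        by (simp only: times_divide_eq_right) (rule nonzero_mult_div_cancel_left[OF nz])
    qed
    have "c * pi^(2*N+2) < lambda_N N * pi^(2*N+2) + (c - lambda_N N) * pi^(2*N+2)"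
      using h1 h2 h3 h4 by linarith
    thus False by (simp add: algebra_simps)
  qed
next
  note N = assms
  fix c :: real
  assume H: "\<forall>t::real. 0 < t \<and> t < pi/2 \<longrightarrow> F_N N t < c * t^(2*N+2)"
  show "mu_N N \<le> c"
  proof (rule ccontr)
    assume "\<not> mu_N N \<le> c"
    hence cm: "c < mu_N N" by simp
    define P where "P t = (2 + (\<Sum>j=1..N-1. real j * 2^(2*j+3) * \<bar>bernoulli (2*j+2)\<bar> / fact (2*j+2) * t^(2*j+2)))" for t :: real
    have Feq: "F_N N = (\<lambda>t. (t/sin t)^2 + t*cos t/sin t - P t)"
      by (rule ext) (simp add: F_N_def tan_def P_def)
    define g where "g t = F_N N t - c * t^(2*N+2)" for t
    have cont: "isCont g (pi/2)"
      unfolding g_def Feq P_def by (intro continuous_intros) auto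
    have g0: "g (pi/2) > 0"
    proof -
      have "g (pi/2) = (mu_N N - c) * (pi/2)^(2*N+2)"
        unfolding g_def F_half[OF N] by (simp add: algebra_simps)
      moreover have "(mu_N N - c) * (pi/2)^(2*N+2) > 0" using cm by (intro mult_pos_pos) auto
      ultimately show ?thesis by simp
    qed
    obtain r where r: "r > 0" "\<And>y. y \<noteq> pi/2 \<and> \<bar>pi/2 - y\<bar> < r \<longrightarrow> 0 < g y"
      using LIM_fun_gt_zero[OF cont[unfolded isCont_def] g0] by blast
    define y where "y = pi/2 - min (r/2) (pi/4)"
    have y: "0 < y" "y < pi/2" "y \<noteq> pi/2" "\<bar>pi/2 - y\<bar> < r"
    proof -
      define m where "m = min (r/2) (pi/4)"
      have m: "0 < m" "m \<le> r/2" "m \<le> pi/4" using r(1) pi_gt_zero by (auto simp: m_def)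
      have yd: "y = pi/2 - m" by (simp add: y_def m_def)
      show "0 < y" "y < pi/2" "y \<noteq> pi/2" "\<bar>pi/2 - y\<bar> < r" unfolding yd using m r(1) by auto
    qed
    have "0 < g y" using r(2) y by blast
    moreover have "F_N N y < c * y^(2*N+2)" using H y by blast
    ultimately show False by (simp add: g_def)
  qed
qed


end
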